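(* There is an absolute constant $c>0$ such that for all $\varepsilon,\delta\in(0,1)$ and every positive integer $m< c\,\varepsilon^{-1}\delta^{-1}$, there exists a finite multiset $A$ of points in $\mathbb{R}^d$ such that, if $S$ consists of $m$ points drawn independently and uniformly at random from $A$, then the empirical mean $\hat\mu=\frac1m\sum_{p\in S}p$ fails to be a $(1+\varepsilon)$-approximate mean of $A$ with probability greater than $\delta$. In other words, $\Omega(\varepsilon^{-1}\delta^{-1})$ independently sampled points are required for the empirical mean to be a $(1+\varepsilon)$-approximate mean with probability at least $1-\delta$ on every instance.
   Context: For a finite multiset $A\subset\mathbb{R}^d$, let $\mathrm{Opt}=\min_{x\in\mathbb{R}^d}\sum_{p\in A}\|p-x\|^2$. A point $x$ is a $(1+\varepsilon)$-approximate mean of $A$ if $\sum_{p\in A}\|p-x\|^2\le(1+\varepsilon)\mathrm{Opt}$. *)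

theory Defs
  imports "HOL-Analysis.Analysis" "HOL-Probability.Probability"
begin

text \<open>Points of R^d are represented as functions nat => real vanishing at all
coordinates i >= d (so the dimension d can be quantified inside the statement).\<close>

definition Rd :: "nat \<Rightarrow> (nat \<Rightarrow> real) set" where
  "Rd d = {x. \<forall>i\<ge>d. x i = 0}"

definition sqdist :: "nat \<Rightarrow> (nat \<Rightarrow> real) \<Rightarrow> (nat \<Rightarrow> real) \<Rightarrow> real" where
  "sqdist d p x = (\<Sum>i<d. (p i - x i)^2)"

definition cost :: "nat \<Rightarrow> (nat \<Rightarrow> real) multiset \<Rightarrow> (nat \<Rightarrow> real) \<Rightarrow> real" where
  "cost d A x = (\<Sum>p\<in>#A. sqdist d p x)"

definition Opt :: "nat \<Rightarrow> (nat \<Rightarrow> real) multiset \<Rightarrow> real" where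
  "Opt d A = (INF x\<in>Rd d. cost d A x)"

definition approx_mean :: "nat \<Rightarrow> real \<Rightarrow> (nat \<Rightarrow> real) multiset \<Rightarrow> (nat \<Rightarrow> real) \<Rightarrow> bool" where
  "approx_mean d \<epsilon> A x \<longleftrightarrow> cost d A x \<le> (1 + \<epsilon>) * Opt d A"

definition emp_mean :: "nat \<Rightarrow> (nat \<Rightarrow> nat \<Rightarrow> real) \<Rightarrow> (nat \<Rightarrow> real)" where
  "emp_mean m S = (\<lambda>i. (\<Sum>j<m. S j i) / real m)"

definition sample_pmf :: "nat \<Rightarrow> (nat \<Rightarrow> real) multiset \<Rightarrow> (nat \<Rightarrow> nat \<Rightarrow> real) pmf" where
  "sample_pmf m A = Pi_pmf {..<m} (\<lambda>_. 0) (\<lambda>_. pmf_of_multiset A)"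

end

theory Submission
  imports Defs
begin

definition lpt :: "real \<Rightarrow> nat \<Rightarrow> real" where
  "lpt a = (\<lambda>i. if i = 0 then a else 0)"

definition Amk :: "nat \<Rightarrow> (nat \<Rightarrow> real) multiset" where
  "Amk n = add_mset (lpt 1) (replicate_mset (n - 1) (lpt 0))"

lemma lpt_neq: "lpt 1 \<noteq> lpt 0"
  by (metis lpt_def zero_neq_one)

lemma lpt_Rd: "1 \<le> d \<Longrightarrow> lpt a \<in> Rd d"
  by (auto simp: lpt_def Rd_def)

lemma sqdist_lpt: assumes "1 \<le> d" shows "sqdist d (lpt a) (lpt b) = (a - b)^2"
proof -
  have h: "(\<lambda>i. (lpt a i - lpt b i)^2) = (\<lambda>i. if i = 0 then (a-b)^2 else 0)"
    by (auto simp: lpt_def)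
  show ?thesis using assms unfolding sqdist_def h by simp
qed

lemma cost_lpt: assumes "1 \<le> d"
  shows "cost d (Amk n) (lpt t) = (1 - t)^2 + real (n - 1) * t^2"
  using assms by (simp add: cost_def Amk_def sqdist_lpt)

lemma cost_nonneg: "0 \<le> cost d A x"
  unfolding cost_def sqdist_def by (induction A) (auto intro!: sum_nonneg add_nonneg_nonneg)

lemma Opt_le: assumes "1 \<le> d" "2 \<le> n"
  shows "Opt d (Amk n) \<le> (real n - 1) / real n"
proof -
  have "Opt d (Amk n) \<le> cost d (Amk n) (lpt (1 / real n))"
    unfolding Opt_def
    by (rule cINF_lower) (auto intro: lpt_Rd assms cost_nonneg simp: bdd_below_def)
  also have "\<dots> = (real n - 1) / real n"
    using assms by (simp add: cost_lpt of_nat_diff field_simps power2_eq_square)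
  finally show ?thesis .
qed

lemma fail_lpt: assumes "1 \<le> d" "2 \<le> n" "0 < \<epsilon>" "real n * (t - 1 / real n)^2 > \<epsilon>"
  shows "\<not> approx_mean d \<epsilon> (Amk n) (lpt t)"
proof -
  have n0: "real n > 0" using assms by simp
  have id: "cost d (Amk n) (lpt t) = (real n - 1) / real n + real n * (t - 1 / real n)^2"
    using assms n0 by (simp add: cost_lpt of_nat_diff field_simps power2_eq_square)
  have "(real n - 1) / real n \<le> 1" using n0 by simp
  then have "\<epsilon> * ((real n - 1) / real n) \<le> \<epsilon> * 1" using assms(3) by (intro mult_left_mono) auto
  then have "\<epsilon> * ((real n - 1) / real n) \<le> \<epsilon>" by simp
  moreover have "(1 + \<epsilon>) * Opt d (Amk n) \<le> (1 + \<epsilon>) * ((real n - 1) / real n)"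
    using Opt_le[OF assms(1,2)] assms(3) by (intro mult_left_mono) auto
  moreover have "(1 + \<epsilon>) * ((real n - 1) / real n) = (real n - 1) / real n + \<epsilon> * ((real n - 1) / real n)"
    by (simp only: distrib_right mult_1)
  ultimately show ?thesis unfolding approx_mean_def id using assms(4)
    by linarith
qed

definition Bset :: "nat \<Rightarrow> (nat \<Rightarrow> nat \<Rightarrow> real) set" where
  "Bset m = PiE_dflt {..<m} (\<lambda>_. 0) (\<lambda>_. {lpt 1, lpt 0})"

definition Zset :: "nat \<Rightarrow> (nat \<Rightarrow> nat \<Rightarrow> real) set" where
  "Zset m = PiE_dflt {..<m} (\<lambda>_. 0) (\<lambda>_. {lpt 0})"

lemma emp_lpt: assumes "S \<in> Bset m"
  shows "emp_mean m S = lpt (real (card {j\<in>{..<m}. S j = lpt 1}) / real m)"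
proof (rule ext)
  fix i
  have Sj: "S j \<in> {lpt 1, lpt 0}" if "j < m" for j
    using assms that by (auto simp: Bset_def PiE_dflt_def)
  have "(\<Sum>j<m. S j i) = (\<Sum>j<m. if S j = lpt 1 then lpt 1 i else 0)"
  proof (rule sum.cong)
    fix j assume "j \<in> {..<m}"
    then have "S j = lpt 1 \<or> S j = lpt 0" using Sj by auto
    then show "S j i = (if S j = lpt 1 then lpt 1 i else 0)"
      using lpt_neq by (auto simp: lpt_def)
  qed simp
  also have "\<dots> = (\<Sum>j\<in>{j\<in>{..<m}. S j = lpt 1}. lpt 1 i)"
    by (rule sum.inter_filter[symmetric]) simp
  also have "\<dots> = real (card {j\<in>{..<m}. S j = lpt 1}) * lpt 1 i" by simp
  finally show "emp_mean m S i = lpt (real (card {j\<in>{..<m}. S j = lpt 1}) / real m) i"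
    by (simp add: emp_mean_def lpt_def)
qed

lemma prob_B: assumes "2 \<le> n"
  shows "measure_pmf.prob (sample_pmf m (Amk n)) (Bset m) = 1"
proof -
  have ne: "Amk n \<noteq> {#}" by (simp add: Amk_def)
  have "measure_pmf.prob (pmf_of_multiset (Amk n)) {lpt 1, lpt 0} = 1"
    using assms by (intro measure_pmf.prob_eq_1[THEN iffD2]) (auto intro!: AE_pmfI simp: ne Amk_def)
  then show ?thesis
    by (simp add: sample_pmf_def Bset_def measure_Pi_pmf_PiE_dflt)
qed

lemma prob_Z: assumes "2 \<le> n"
  shows "measure_pmf.prob (sample_pmf m (Amk n)) (Zset m) = (1 - 1 / real n) ^ m"
proof -
  have ne: "Amk n \<noteq> {#}" by (simp add: Amk_def)
  have "measure_pmf.prob (pmf_of_multiset (Amk n)) {lpt 0} = 1 - 1 / real n"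
    using assms lpt_neq[symmetric] assms by (simp add: measure_pmf_single ne Amk_def of_nat_diff field_simps)
  then show ?thesis
    by (simp add: sample_pmf_def Zset_def measure_Pi_pmf_PiE_dflt)
qed


lemma card_pos_of_notZ: assumes "S \<in> Bset m" "S \<notin> Zset m"
  shows "1 \<le> card {j\<in>{..<m}. S j = lpt 1}"
proof -
  obtain j where j: "j < m" "S j \<noteq> lpt 0"
    using assms by (auto simp: Bset_def Zset_def PiE_dflt_def)
  then have "S j = lpt 1" using assms(1) by (auto simp: Bset_def PiE_dflt_def)
  then have "j \<in> {j\<in>{..<m}. S j = lpt 1}" using j by simp
  then have "{j\<in>{..<m}. S j = lpt 1} \<noteq> {}" by blast
  then show ?thesis by (simp add: Suc_le_eq card_gt_0_iff)
qed

lemma pow_bound: assumes "0 < q" "q < 1" "2 * \<delta> < real m * q" "0 < \<delta>" "\<delta> \<le> 1/2"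
  shows "(1 - q) ^ m < 1 - \<delta>"
proof -
  have "(1 - q) ^ m * (1 + q) ^ m = (1 - q^2) ^ m"
    by (simp add: power_mult_distrib[symmetric] algebra_simps power2_eq_square)
  also have "\<dots> \<le> 1" using assms by (intro power_le_one) (auto simp: power2_eq_square mult_le_one)
  finally have a: "(1 - q) ^ m * (1 + q) ^ m \<le> 1" .
  have b: "1 + real m * q \<le> (1 + q) ^ m" using assms by (intro Bernoulli_inequality) simp
  have c: "(1 - q) ^ m \<ge> 0" using assms by simp
  have "(1 - q) ^ m * (1 + 2 * \<delta>) \<le> (1 - q) ^ m * (1 + q) ^ m"
    using b assms c by (intro mult_left_mono) auto
  have "(1 - q) ^ m * (1 + 2 * \<delta>) < 1"
  proof -
    have "(1 - q) ^ m > 0" using assms by simp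
    then have "(1 - q) ^ m * (1 + 2 * \<delta>) < (1 - q) ^ m * (1 + q) ^ m"
      using b assms by (intro mult_strict_left_mono) auto
    then show ?thesis using a by linarith
  qed
  moreover have "(1 - \<delta>) * (1 + 2 * \<delta>) \<ge> 1"
  proof -
    have "\<delta> * (1 - 2 * \<delta>) \<ge> 0" using assms by (intro mult_nonneg_nonneg) auto
    then show ?thesis by (simp add: algebra_simps)
  qed
  ultimately show ?thesis using assms
    by (smt (verit, best) mult_right_mono)
qed

theorem theorem5p2:
  shows "\<exists>c::real. c > 0 \<and>
    (\<forall>(\<epsilon>::real) (\<delta>::real) (m::nat) (d::nat).
       0 < \<epsilon> \<and> \<epsilon> < 1 \<and> 0 < \<delta> \<and> \<delta> < 1 \<and> 0 < m \<and>
       real m < c / (\<epsilon> * \<delta>) \<and> 1 \<le> d \<longrightarrow>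
       (\<exists>A. A \<noteq> {#} \<and> set_mset A \<subseteq> Rd d \<and>
          measure_pmf.prob (sample_pmf m A)
            {S. \<not> approx_mean d \<epsilon> A (emp_mean m S)} > \<delta>))"
proof (intro exI[of _ "1/16"] conjI allI impI)
  fix \<epsilon> \<delta> :: real and m d :: nat
  assume H: "0 < \<epsilon> \<and> \<epsilon> < 1 \<and> 0 < \<delta> \<and> \<delta> < 1 \<and> 0 < m \<and>
       real m < (1/16) / (\<epsilon> * \<delta>) \<and> 1 \<le> d"
  then have e0: "0 < \<epsilon>" and d0: "0 < \<delta>" and d1: "\<delta> < 1" and m0: "0 < m" and d: "1 \<le> d"
    and mb: "real m < (1/16) / (\<epsilon> * \<delta>)" by auto
  have mb': "16 * \<epsilon> * \<delta> * real m < 1" using mb e0 d0 by (simp add: field_simps)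
  have m1: "real m \<ge> 1" using m0 by simp
  let ?E = "\<lambda>A. {S. \<not> approx_mean d \<epsilon> A (emp_mean m S)}"
  have setA: "set_mset (Amk n) \<subseteq> Rd d" for n using d by (auto simp: Amk_def lpt_Rd)
  have neA: "Amk n \<noteq> {#}" for n by (simp add: Amk_def)
  show "\<exists>A. A \<noteq> {#} \<and> set_mset A \<subseteq> Rd d \<and> measure_pmf.prob (sample_pmf m A) (?E A) > \<delta>"
  proof (cases "\<delta> \<le> 1/8")
    case True
    define x where "x = real m / (4 * \<delta>)"
    define n where "n = nat \<lceil>x\<rceil>"
    have x2: "x \<ge> 2" using True d0 m1 by (simp add: x_def field_simps)
    have nx: "real n \<ge> x" "real n < x + 1" using x2 by (auto simp: n_def) linarith
    have n2: "2 \<le> n" using nx x2 by linarith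
    have nlt: "real n < real m / (2 * \<delta>)" using nx x2 d0 by (simp add: x_def field_simps)
    have sub: "Bset m - Zset m \<subseteq> ?E (Amk n)"
    proof
      fix S assume S: "S \<in> Bset m - Zset m"
      define k where "k = card {j\<in>{..<m}. S j = lpt 1}"
      have k1: "real k \<ge> 1" using card_pos_of_notZ[of S m] S by (simp add: k_def)
      define t where "t = real k / real m"
      have t1: "t \<ge> 1 / real m" using k1 m1 by (simp add: t_def divide_right_mono)
      have inv: "1 / real n \<le> 1 / (2 * real m)"
      proof -
        have "1 / real n \<le> 1 / x" using nx x2 by (intro divide_left_mono) auto
        also have "\<dots> = 4 * \<delta> / real m" using d0 by (simp add: x_def)
        also have "\<dots> \<le> 1 / (2 * real m)" using True m1 by (simp add: field_simps)
        finally show ?thesis .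
      qed
      have pos: "t - 1 / real n \<ge> 1 / (2 * real m)" using t1 inv m1 by (simp add: field_simps)
      have "(1 / (2 * real m))^2 \<le> (t - 1 / real n)^2"
        using pos m1 by (intro power_mono) auto
      then have "real n * (1 / (2 * real m))^2 \<le> real n * (t - 1 / real n)^2"
        by (intro mult_left_mono) auto
      moreover have "x * (1 / (2 * real m))^2 \<le> real n * (1 / (2 * real m))^2"
        using nx by (intro mult_right_mono) auto
      moreover have "x * (1 / (2 * real m))^2 = 1 / (16 * \<delta> * real m)"
        using m1 d0 by (simp add: x_def field_simps power2_eq_square)
      moreover have "\<epsilon> < 1 / (16 * \<delta> * real m)" using mb' d0 m1 by (simp add: field_simps)
      ultimately have "real n * (t - 1 / real n)^2 > \<epsilon>" by linarith
      then have "\<not> approx_mean d \<epsilon> (Amk n) (lpt t)" using fail_lpt d n2 e0 by blast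
      moreover have "emp_mean m S = lpt t" using emp_lpt[of S m] S by (simp add: t_def k_def)
      ultimately show "S \<in> ?E (Amk n)" by simp
    qed
    have ZB: "Zset m \<subseteq> Bset m" by (auto simp: Zset_def Bset_def PiE_dflt_def)
    have "measure_pmf.prob (sample_pmf m (Amk n)) (Bset m - Zset m) = 1 - (1 - 1 / real n) ^ m"
      using prob_B[OF n2] prob_Z[OF n2] ZB by (simp add: measure_pmf.finite_measure_Diff)
    also have "\<dots> > \<delta>"
    proof -
      have "(1 - 1 / real n) ^ m < 1 - \<delta>"
      proof (rule pow_bound)
        show "0 < 1 / real n" "1 / real n < 1" using n2 by auto
        show "2 * \<delta> < real m * (1 / real n)" using nlt n2 d0 by (simp add: field_simps)
      qed (use d0 True in auto)
      then show ?thesis by simp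
    qed
    finally have "measure_pmf.prob (sample_pmf m (Amk n)) (?E (Amk n)) > \<delta>"
      using measure_pmf.finite_measure_mono[OF sub] by (smt (verit) sets_measure_pmf UNIV_I)
    then show ?thesis using neA setA by blast
  next
    case False
    define n where "n = 2 * m"
    have n2: "2 \<le> n" using m0 by (simp add: n_def)
    have sub: "Bset m \<subseteq> ?E (Amk n)"
    proof
      fix S assume S: "S \<in> Bset m"
      define k where "k = card {j\<in>{..<m}. S j = lpt 1}"
      define t where "t = real k / real m"
      have sq: "(2 * real k - 1)^2 \<ge> 1"
      proof (cases "k = 0")
        case False
        then have "2 * real k - 1 \<ge> 1" by simp
        then show ?thesis by (simp add: one_le_power)
      qed simp
      have "real n * (t - 1 / real n)^2 = (2 * real k - 1)^2 / (2 * real m)"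
        using m1 by (simp add: n_def t_def field_simps power2_eq_square)
      moreover have "(2 * real k - 1)^2 / (2 * real m) \<ge> 1 / (2 * real m)"
        using sq m1 by (intro divide_right_mono) auto
      moreover have "\<epsilon> < 1 / (2 * real m)"
      proof -
        have "\<epsilon> * real m * 2 \<le> \<epsilon> * real m * (16 * \<delta>)"
          using False e0 m1 by (intro mult_left_mono) auto
        then have "\<epsilon> * real m * 2 < 1" using mb' by (simp add: algebra_simps)
        then show ?thesis using m1 by (simp add: field_simps)
      qed
      ultimately have "real n * (t - 1 / real n)^2 > \<epsilon>" by linarith
      then have "\<not> approx_mean d \<epsilon> (Amk n) (lpt t)" using fail_lpt d n2 e0 by blast
      moreover have "emp_mean m S = lpt t" using emp_lpt[of S m] S by (simp add: t_def k_def)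
      ultimately show "S \<in> ?E (Amk n)" by simp
    qed
    have "measure_pmf.prob (sample_pmf m (Amk n)) (?E (Amk n)) \<ge> 1"
      using measure_pmf.finite_measure_mono[OF sub, of "sample_pmf m (Amk n)"] prob_B[OF n2, of m] by simp
    then have "measure_pmf.prob (sample_pmf m (Amk n)) (?E (Amk n)) > \<delta>" using d1 by linarith
    then show ?thesis using neA setA by blast
  qed
qed (simp)

end
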